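(* Let $L>0$ and let $s\mapsto A(s)$, $s\in\mathbb{R}$, be an $L$-periodic $C^1$ family of complex symmetric $2\times 2$ matrices such that for every $s$, $A(s)A(s)^\dagger$ has eigenvalues $\lambda_1(s)^2>\lambda_2(s)^2>0$ ($\lambda_j>0$). Let $\mathbf{u}_1(s),\mathbf{u}_2(s)$ be $C^1$, $L$-periodic, orthonormal eigenvectors with $A A^\dagger\mathbf{u}_j=\lambda_j^2\mathbf{u}_j$, let $\tilde\lambda_j(s)=\mathbf{u}_j(s)^TA(s)^\dagger\mathbf{u}_j(s)$, and let $\gamma_j:\mathbb{R}\to\mathbb{R}$ be a $C^1$ function with $\tilde\lambda_j=\lambda_j e^{i\gamma_j}$. Define $\psi_{j,\pm}(s)=\frac{1}{\sqrt2}\begin{pmatrix}\pm e^{-i\gamma_j(s)}\mathbf{u}_j(s)\\ \overline{\mathbf{u}_j(s)}\end{pmatrix}$ and the Zak phase $\mathcal{Z}_j=i\int_0^L\langle\psi_{j,\pm}(s),\partial_s\psi_{j,\pm}(s)\rangle\,ds$ (inner product antilinear in the first slot). Then, for either choice of sign, $$\mathcal{Z}_j=\frac{\gamma_j(L)-\gamma_j(0)}{2}=\pi\,W(\tilde\lambda_j),$$ where $W(\tilde\lambda_j)\in\mathbb{Z}$ is the winding number about $0$ of the closed curve $s\mapsto\tilde\lambda_j(s)$, $s\in[0,L]$.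
   Context: $\overline{\cdot}$ denotes complex conjugation, $^T$ transpose, $^\dagger$ conjugate transpose. The winding number of a nonvanishing continuous $L$-periodic function $f:\mathbb{R}\to\mathbb{C}\setminus\{0\}$ is $(\arg f(L)-\arg f(0))/(2\pi)$ for a continuous branch of $\arg f$. *)

theory Defs
  imports "HOL-Analysis.Analysis"
begin

definition vconj :: "complex^'n \<Rightarrow> complex^'n" where
  "vconj x = (\<chi> i. cnj (x $ i))"

definition cadj :: "complex^'n^'m \<Rightarrow> complex^'m^'n" where
  "cadj M = (\<chi> i j. cnj (M $ j $ i))"

definition cinner :: "complex^'n \<Rightarrow> complex^'n \<Rightarrow> complex" where
  "cinner x y = (\<Sum>i\<in>UNIV. cnj (x $ i) * y $ i)"

definition tdot :: "complex^'n \<Rightarrow> complex^'n \<Rightarrow> complex" where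
  "tdot x y = (\<Sum>i\<in>UNIV. x $ i * y $ i)"

text \<open>Inner product on C^4 = C^2 (+) C^2 (vectors stacked as pairs).\<close>
definition cinner4 :: "(complex^2) \<times> (complex^2) \<Rightarrow> (complex^2) \<times> (complex^2) \<Rightarrow> complex" where
  "cinner4 x y = cinner (fst x) (fst y) + cinner (snd x) (snd y)"

definition winding_num :: "(real \<Rightarrow> complex) \<Rightarrow> real \<Rightarrow> real" where
  "winding_num f L = (THE w. \<exists>\<theta>. continuous_on {0..L} \<theta> \<and>
      (\<forall>s\<in>{0..L}. f s = complex_of_real (cmod (f s)) * cis (\<theta> s)) \<and>
      w = (\<theta> L - \<theta> 0) / (2 * pi))"

end

theory Submission
  imports Defs
begin


lemma vec_has_vderiv:
  fixes f :: "real \<Rightarrow> 'a::real_normed_vector ^'n"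
  assumes "\<And>i. ((\<lambda>x. f x $ i) has_vector_derivative f' $ i) F"
  shows "(f has_vector_derivative f') F"
  using assms unfolding has_vector_derivative_def has_derivative_def
  apply (intro conjI)
   apply (simp add: bounded_linear_scaleR_left)
  apply (rule vec_tendstoI)
  apply simp
  done

lemma C1_obtain:
  assumes "f C1_differentiable_on UNIV"
  obtains D where "\<And>s. (f has_vector_derivative D s) (at s)"
  using assms unfolding C1_differentiable_on_def by blast

lemma zak_calc:
  fixes u :: "real \<Rightarrow> complex^2" and g :: "real \<Rightarrow> real" and \<sigma> :: complex
    and \<psi> :: "real \<Rightarrow> (complex^2) \<times> (complex^2)"
  assumes uC: "u C1_differentiable_on UNIV" and gC: "g C1_differentiable_on UNIV"
    and nrm: "\<forall>s. cinner (u s) (u s) = 1" and sg: "\<sigma> \<in> {1,-1}" and L: "L > 0"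
    and \<psi>: "\<forall>s. \<psi> s =
        (complex_of_real (1 / sqrt 2) *s (\<sigma> * exp (- \<i> * complex_of_real (g s)) *s u s),
         complex_of_real (1 / sqrt 2) *s vconj (u s))"
  shows "\<i> * integral {0..L} (\<lambda>s. cinner4 (\<psi> s) (vector_derivative \<psi> (at s)))
           = complex_of_real ((g L - g 0) / 2)"
proof -
  obtain u' where u': "\<And>s. (u has_vector_derivative u' s) (at s)" using uC C1_obtain by blast
  obtain g' where g': "\<And>s. (g has_vector_derivative g' s) (at s)" using gC C1_obtain by blast
  define c where "c = complex_of_real (1 / sqrt 2)"
  define e where "e = (\<lambda>s. exp (- \<i> * complex_of_real (g s)))"
  have ui: "((\<lambda>s. u s $ i) has_vector_derivative u' s $ i) (at s)" for i s
    using bounded_linear.has_vector_derivative[OF bounded_linear_vec_nth u'] .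
  have gc: "((\<lambda>s. complex_of_real (g s)) has_vector_derivative complex_of_real (g' s)) (at s)" for s
    using g'[of s] by (intro has_vector_derivative_of_real) (simp add: has_real_derivative_iff_has_vector_derivative)
  have ed: "(e has_vector_derivative (- \<i> * complex_of_real (g' s) * e s)) (at s)" for s
  proof -
    have "((\<lambda>s. - \<i> * complex_of_real (g s)) has_vector_derivative (- \<i> * complex_of_real (g' s))) (at s)"
      using gc[of s] by (rule has_vector_derivative_mult_right)
    from field_vector_diff_chain_at[OF this DERIV_exp]
    show ?thesis unfolding e_def by (simp add: o_def)
  qed
  define P where "P = (\<lambda>s. ((\<chi> i. c * (\<sigma> * (e s * u' s $ i + (- \<i> * complex_of_real (g' s) * e s) * u s $ i))),
                           (\<chi> i. c * cnj (u' s $ i))))"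
  have \<psi>': "\<psi> = (\<lambda>s. ((\<chi> i. c * (\<sigma> * e s * u s $ i)), (\<chi> i. c * cnj (u s $ i))))"
    using \<psi> by (auto simp: c_def e_def vector_scalar_mult_def vconj_def mult.assoc)
  have Pd: "(\<psi> has_vector_derivative P s) (at s)" for s
    unfolding \<psi>' P_def
    apply (intro has_vector_derivative_Pair vec_has_vderiv)
     apply simp
     apply (intro has_vector_derivative_mult_right)
     apply (rule has_vector_derivative_eq_rhs)
      apply (rule has_vector_derivative_mult[OF has_vector_derivative_mult_right[OF ed] ui])
     apply (simp add: algebra_simps)
    apply simp
    apply (intro has_vector_derivative_mult_right has_vector_derivative_cnj ui)
    done
  have vd: "vector_derivative \<psi> (at s) = P s" for s using Pd vector_derivative_at by blast
  have N: "cnj (u s $ 1) * u s $ 1 + cnj (u s $ 2) * u s $ 2 = 1" for s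
    using nrm[rule_format, of s] by (simp add: cinner_def sum_2)
  have R: "(cnj (u s $ 1) * u' s $ 1 + cnj (u s $ 2) * u' s $ 2)
     + cnj (cnj (u s $ 1) * u' s $ 1 + cnj (u s $ 2) * u' s $ 2) = 0" for s
  proof -
    have d1: "((\<lambda>s. cnj (u s $ 1) * u s $ 1 + cnj (u s $ 2) * u s $ 2) has_vector_derivative
       (cnj (u s $ 1) * u' s $ 1 + cnj (u' s $ 1) * u s $ 1) + (cnj (u s $ 2) * u' s $ 2 + cnj (u' s $ 2) * u s $ 2)) (at s)"
      by (intro has_vector_derivative_add has_vector_derivative_mult has_vector_derivative_cnj ui)
    have d0: "((\<lambda>s. cnj (u s $ 1) * u s $ 1 + cnj (u s $ 2) * u s $ 2) has_vector_derivative 0) (at s)"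
      using N by (simp add: has_vector_derivative_const)
    from vector_derivative_unique_at[OF d1 d0] show ?thesis by (simp add: algebra_simps)
  qed
  have cc: "cnj c * c = 1/2"
    unfolding c_def by (simp flip: of_real_mult)
  have ss: "cnj \<sigma> * \<sigma> = 1" using sg by auto
  have ee: "cnj (e s) * e s = 1" for s
    unfolding e_def by (simp add: exp_cnj flip: exp_add)
  have integrand: "cinner4 (\<psi> s) (vector_derivative \<psi> (at s)) = - \<i> * complex_of_real (g' s) / 2" for s
  proof -
    define X where "X = cnj (u s $ 1) * u' s $ 1 + cnj (u s $ 2) * u' s $ 2"
    have "cinner4 (\<psi> s) (vector_derivative \<psi> (at s)) =
       (cnj c * c) * ((cnj \<sigma> * \<sigma>) * (cnj (e s) * e s) * (X - \<i> * complex_of_real (g' s) *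
          (cnj (u s $ 1) * u s $ 1 + cnj (u s $ 2) * u s $ 2)) + cnj X)"
      unfolding vd unfolding P_def \<psi>' cinner4_def cinner_def sum_2 X_def
      by (simp add: algebra_simps)
    also have "\<dots> = - \<i> * complex_of_real (g' s) / 2"
      using R[of s] unfolding cc ss ee N X_def[symmetric] by (simp add: algebra_simps)
    finally show ?thesis .
  qed
  have hd: "((\<lambda>s. - \<i> * complex_of_real (g s) / 2) has_vector_derivative
      (- \<i> * complex_of_real (g' s) / 2)) (at s within {0..L})" for s
    by (rule has_vector_derivative_at_within, intro has_vector_derivative_divide has_vector_derivative_mult_right gc)
  have "((\<lambda>s. - \<i> * complex_of_real (g' s) / 2) has_integral
      (- \<i> * complex_of_real (g L) / 2 - - \<i> * complex_of_real (g 0) / 2)) {0..L}"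
    using fundamental_theorem_of_calculus[OF _ hd] L by simp
  hence "integral {0..L} (\<lambda>s. cinner4 (\<psi> s) (vector_derivative \<psi> (at s)))
     = - \<i> * complex_of_real (g L) / 2 - - \<i> * complex_of_real (g 0) / 2"
    unfolding integrand by (rule integral_unique)
  hence "\<i> * integral {0..L} (\<lambda>s. cinner4 (\<psi> s) (vector_derivative \<psi> (at s)))
     = \<i> * (- \<i> * complex_of_real (g L) / 2 - - \<i> * complex_of_real (g 0) / 2)" by simp
  also have "\<dots> = (complex_of_real (g L) - complex_of_real (g 0)) / 2"
    by (simp add: field_simps)
  finally show ?thesis by simp
qed



lemma cis_eq_int:
  assumes "cis a = cis b"
  shows "\<exists>n::int. a = b + 2 * real_of_int n * pi"
proof -
  from assms have "exp (\<i> * complex_of_real a) = exp (\<i> * complex_of_real b)" by (simp add: cis_conv_exp)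
  then obtain n :: int where "\<i> * complex_of_real a = \<i> * complex_of_real b + (of_int (2 * n) * pi) * \<i>"
    using exp_eq by blast
  hence "Im (\<i> * complex_of_real a) = Im (\<i> * complex_of_real b + (of_int (2 * n) * pi) * \<i>)" by simp
  hence "a = b + 2 * real_of_int n * pi" by simp
  thus ?thesis by blast
qed

lemma winding_calc:
  fixes f :: "real \<Rightarrow> complex" and lam g :: "real \<Rightarrow> real"
  assumes gc: "continuous_on {0..L} g" and pos: "\<forall>s. lam s > 0"
    and ph: "\<forall>s. f s = complex_of_real (lam s) * exp (\<i> * complex_of_real (g s))"
    and per: "f L = f 0" and L: "L > 0"
  shows "winding_num f L = (g L - g 0) / (2 * pi) \<and> (g L - g 0) / (2 * pi) \<in> \<int>"
proof -
  have nf: "cmod (f s) = lam s" for s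
    using ph pos by (simp add: norm_mult) (metis abs_of_pos less_imp_le abs_of_nonneg)
  have rep: "f s = complex_of_real (cmod (f s)) * cis (g s)" for s
    using ph nf by (simp add: cis_conv_exp)
  have "winding_num f L = (g L - g 0) / (2 * pi)"
    unfolding winding_num_def
  proof (rule the_equality)
    show "\<exists>\<theta>. continuous_on {0..L} \<theta> \<and> (\<forall>s\<in>{0..L}. f s = complex_of_real (cmod (f s)) * cis (\<theta> s))
          \<and> (g L - g 0) / (2 * pi) = (\<theta> L - \<theta> 0) / (2 * pi)"
      using gc rep by blast
  next
    fix w assume "\<exists>\<theta>. continuous_on {0..L} \<theta> \<and> (\<forall>s\<in>{0..L}. f s = complex_of_real (cmod (f s)) * cis (\<theta> s))
          \<and> w = (\<theta> L - \<theta> 0) / (2 * pi)"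
    then obtain \<theta> where tc: "continuous_on {0..L} \<theta>"
      and tr: "\<forall>s\<in>{0..L}. f s = complex_of_real (cmod (f s)) * cis (\<theta> s)"
      and w: "w = (\<theta> L - \<theta> 0) / (2 * pi)" by blast
    define h where "h = (\<lambda>s. (\<theta> s - g s) / (2 * pi))"
    have hint: "h s \<in> \<int>" if "s \<in> {0..L}" for s
    proof -
      have "complex_of_real (cmod (f s)) * cis (\<theta> s) = complex_of_real (cmod (f s)) * cis (g s)"
        using tr that rep by metis
      moreover have "cmod (f s) \<noteq> 0" using nf pos by (metis less_irrefl)
      ultimately have "cis (\<theta> s) = cis (g s)" by simp
      then obtain n :: int where "\<theta> s = g s + 2 * real_of_int n * pi" using cis_eq_int by blast
      hence "h s = of_int n" unfolding h_def by simp
      thus ?thesis by simp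
    qed
    have "h constant_on {0..L}"
    proof (rule continuous_discrete_range_constant)
      show "connected {0..L::real}" by simp
      show "continuous_on {0..L} h" unfolding h_def by (auto intro!: continuous_intros tc gc)
      fix x assume x: "x \<in> {0..L}"
      show "\<exists>e>0. \<forall>y. y \<in> {0..L} \<and> h y \<noteq> h x \<longrightarrow> e \<le> norm (h y - h x)"
      proof (intro exI[of _ 1] conjI allI impI)
        fix y assume y: "y \<in> {0..L} \<and> h y \<noteq> h x"
        obtain m where m: "h y = of_int m" using hint y Ints_cases by blast
        obtain n where n: "h x = of_int n" using hint x Ints_cases by blast
        have "m \<noteq> n" using y m n by auto
        hence "1 \<le> \<bar>m - n\<bar>" by linarith
        thus "1 \<le> norm (h y - h x)" using m n by (simp flip: of_int_diff)
      qed simp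
    qed
    hence "h L = h 0" using L unfolding constant_on_def by force
    thus "w = (g L - g 0) / (2 * pi)" unfolding w h_def by (simp add: field_simps)
  qed
  moreover have "(g L - g 0) / (2 * pi) \<in> \<int>"
  proof -
    have "lam L = lam 0" using nf per by metis
    hence "exp (\<i> * complex_of_real (g L)) = exp (\<i> * complex_of_real (g 0))"
      using ph per pos by (metis mult_cancel_left of_real_eq_0_iff less_irrefl)
    hence "cis (g L) = cis (g 0)" by (simp add: cis_conv_exp)
    then obtain n :: int where "g L = g 0 + 2 * real_of_int n * pi" using cis_eq_int by blast
    hence "(g L - g 0) / (2 * pi) = of_int n" by simp
    thus ?thesis by simp
  qed
  ultimately show ?thesis by simp
qed

theorem mainTheorem2:
  fixes L :: real
    and A :: "real \<Rightarrow> complex^2^2"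
    and lam :: "nat \<Rightarrow> real \<Rightarrow> real"
    and u :: "nat \<Rightarrow> real \<Rightarrow> complex^2"
    and \<gamma> :: "nat \<Rightarrow> real \<Rightarrow> real"
    and lamt :: "nat \<Rightarrow> real \<Rightarrow> complex"
    and \<psi> :: "nat \<Rightarrow> complex \<Rightarrow> real \<Rightarrow> (complex^2) \<times> (complex^2)"
    and Zak :: "nat \<Rightarrow> complex \<Rightarrow> complex"
  assumes L_pos: "L > 0"
    and A_C1: "A C1_differentiable_on UNIV"
    and A_per: "\<forall>s. A (s + L) = A s"
    and A_sym: "\<forall>s. transpose (A s) = A s"
    and lam_pos: "\<forall>s. lam 1 s > lam 2 s \<and> lam 2 s > 0"
    and AA_eigs: "\<forall>s. \<forall>\<mu>. (\<exists>v. v \<noteq> 0 \<and> (A s ** cadj (A s)) *v v = \<mu> *s v)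
                       \<longleftrightarrow> (\<mu> = complex_of_real ((lam 1 s)\<^sup>2) \<or> \<mu> = complex_of_real ((lam 2 s)\<^sup>2))"
    and u_C1: "\<forall>j\<in>{1,2}. u j C1_differentiable_on UNIV"
    and u_per: "\<forall>j\<in>{1,2}. \<forall>s. u j (s + L) = u j s"
    and u_orth: "\<forall>j\<in>{1,2}. \<forall>k\<in>{1,2}. \<forall>s. cinner (u j s) (u k s) = (if j = k then 1 else 0)"
    and u_eig: "\<forall>j\<in>{1,2}. \<forall>s. (A s ** cadj (A s)) *v u j s = complex_of_real ((lam j s)\<^sup>2) *s u j s"
    and lamt_def: "\<forall>j\<in>{1,2}. \<forall>s. lamt j s = tdot (u j s) (cadj (A s) *v u j s)"
    and \<gamma>_C1: "\<forall>j\<in>{1,2}. \<gamma> j C1_differentiable_on UNIV"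
    and \<gamma>_phase: "\<forall>j\<in>{1,2}. \<forall>s. lamt j s = complex_of_real (lam j s) * exp (\<i> * complex_of_real (\<gamma> j s))"
    and \<psi>_def: "\<forall>j\<in>{1,2}. \<forall>\<sigma>\<in>{1,-1}. \<forall>s. \<psi> j \<sigma> s =
        (complex_of_real (1 / sqrt 2) *s (\<sigma> * exp (- \<i> * complex_of_real (\<gamma> j s)) *s u j s),
         complex_of_real (1 / sqrt 2) *s vconj (u j s))"
    and Zak_def: "\<forall>j\<in>{1,2}. \<forall>\<sigma>\<in>{1,-1}. Zak j \<sigma> =
        \<i> * integral {0..L} (\<lambda>s. cinner4 (\<psi> j \<sigma> s) (vector_derivative (\<psi> j \<sigma>) (at s)))"
  shows "\<forall>j\<in>{1,2}. \<forall>\<sigma>\<in>{1,-1}.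
           Zak j \<sigma> = complex_of_real ((\<gamma> j L - \<gamma> j 0) / 2)
         \<and> Zak j \<sigma> = complex_of_real (pi * winding_num (lamt j) L)
         \<and> winding_num (lamt j) L \<in> \<int>"
proof (intro ballI)
  fix j :: nat and \<sigma> :: complex
  assume j: "j \<in> {1,2}" and sg: "\<sigma> \<in> {1,-1}"
  have z: "Zak j \<sigma> = complex_of_real ((\<gamma> j L - \<gamma> j 0) / 2)"
  proof -
    have "Zak j \<sigma> = \<i> * integral {0..L} (\<lambda>s. cinner4 (\<psi> j \<sigma> s) (vector_derivative (\<psi> j \<sigma>) (at s)))"
      using Zak_def j sg by blast
    also have "\<dots> = complex_of_real ((\<gamma> j L - \<gamma> j 0) / 2)"
    proof (rule zak_calc)
      show "u j C1_differentiable_on UNIV" using u_C1 j by blast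
      show "\<gamma> j C1_differentiable_on UNIV" using \<gamma>_C1 j by blast
      show "\<forall>s. cinner (u j s) (u j s) = 1" using u_orth j by auto
      show "\<sigma> \<in> {1,-1}" by (rule sg)
      show "L > 0" by (rule L_pos)
      show "\<forall>s. \<psi> j \<sigma> s =
        (complex_of_real (1 / sqrt 2) *s (\<sigma> * exp (- \<i> * complex_of_real (\<gamma> j s)) *s u j s),
         complex_of_real (1 / sqrt 2) *s vconj (u j s))" using \<psi>_def j sg by blast
    qed
    finally show ?thesis .
  qed
  have w: "winding_num (lamt j) L = (\<gamma> j L - \<gamma> j 0) / (2 * pi) \<and> (\<gamma> j L - \<gamma> j 0) / (2 * pi) \<in> \<int>"
  proof (rule winding_calc)
    show "continuous_on {0..L} (\<gamma> j)"
      using \<gamma>_C1 j C1_differentiable_imp_continuous_on continuous_on_subset by blast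
    show "\<forall>s. lam j s > 0" using lam_pos j by (metis empty_iff insert_iff order.strict_trans)
    show "\<forall>s. lamt j s = complex_of_real (lam j s) * exp (\<i> * complex_of_real (\<gamma> j s))"
      using \<gamma>_phase j by blast
    show "lamt j L = lamt j 0"
      using lamt_def j u_per A_per by (metis add_0)
    show "L > 0" by (rule L_pos)
  qed
  show "Zak j \<sigma> = complex_of_real ((\<gamma> j L - \<gamma> j 0) / 2)
         \<and> Zak j \<sigma> = complex_of_real (pi * winding_num (lamt j) L)
         \<and> winding_num (lamt j) L \<in> \<int>"
    using z w by simp
qed

end
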